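(* For any $(\Sigma_{\rho_0},\dots,\Sigma_{\rho_{T-1}})\in\mathcal M_T$, the matrices $\Pi_k$ satisfy $\hat\Pi_k\succeq\Pi_k\succeq\check\Pi_k\succeq0$ for all $k\in\{0,\dots,T\}$, and $\Sigma_{Q_k}$ satisfies $\hat\Sigma_{Q_k}\succeq\Sigma_{Q_k}\succeq\check\Sigma_{Q_k}\succ0$ for all $k\in\{0,\dots,T-1\}$, where $\hat\Sigma_{Q_k}=\varepsilon(R_k+B_k^\top\check\Pi_{k+1}B_k)^{-1}$ and $\check\Sigma_{Q_k}=\varepsilon(R_k+B_k^\top\hat\Pi_{k+1}B_k)^{-1}$.
   Context: Fix integers $n,m,T\ge1$, $\varepsilon>0$, $A_k\in\mathbb R^{n\times n}$, $B_k\in\mathbb R^{n\times m}$, symmetric positive definite $R_k\in\mathbb R^{m\times m}$ ($k=0,\dots,T-1$) and $F\in\mathbb R^{n\times n}$. $\mathcal M_T=(\mathbb S^m_{\succeq0})^T$, $\mathbb S^m_{\succeq0}$ the symmetric PSD $m\times m$ matrices; $\Sigma^{1/2}$ the PSD square root. For $(\Sigma_{\rho_0},\dots,\Sigma_{\rho_{T-1}})\in\mathcal M_T$: $\Pi_T=F$, $C_k=(R_k+B_k^\top\Pi_{k+1}B_k)/\varepsilon$, $\Pi_k=A_k^\top\Pi_{k+1}A_k-\frac1\varepsilon A_k^\top\Pi_{k+1}B_k\Sigma_{\rho_k}^{1/2}(I+\Sigma_{\rho_k}^{1/2}C_k\Sigma_{\rho_k}^{1/2})^{-1}\Sigma_{\rho_k}^{1/2}B_k^\top\Pi_{k+1}A_k$,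 $\Sigma_{Q_k}=\varepsilon(R_k+B_k^\top\Pi_{k+1}B_k)^{-1}$. Also $\check\Pi_T=F$, $\check\Pi_k=A_k^\top\check\Pi_{k+1}A_k-A_k^\top\check\Pi_{k+1}B_k(R_k+B_k^\top\check\Pi_{k+1}B_k)^{-1}B_k^\top\check\Pi_{k+1}A_k$ ($k=T-1,\dots,0$), and $\hat\Pi_T=F$, $\hat\Pi_k=A_k^\top\cdots A_{T-1}^\top FA_{T-1}\cdots A_k$ for $k\le T-1$. *)

theory Defs
  imports "HOL-Analysis.Analysis"
begin

definition psd :: "real^'n^'n \<Rightarrow> bool" where
  "psd M \<longleftrightarrow> transpose M = M \<and> (\<forall>x. 0 \<le> x \<bullet> (M *v x))"

definition pd :: "real^'n^'n \<Rightarrow> bool" where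
  "pd M \<longleftrightarrow> transpose M = M \<and> (\<forall>x. x \<noteq> 0 \<longrightarrow> 0 < x \<bullet> (M *v x))"

definition loewner_ge :: "real^'n^'n \<Rightarrow> real^'n^'n \<Rightarrow> bool" where
  "loewner_ge X Y \<longleftrightarrow> psd (X - Y)"

definition psd_sqrt :: "real^'n^'n \<Rightarrow> real^'n^'n" where
  "psd_sqrt M = (THE S. psd S \<and> S ** S = M)"

(* backward recursion: X_T = F, X_k = step k X_{k+1}, k = T-1,...,0 *)
primrec bwd_aux :: "nat \<Rightarrow> 'a \<Rightarrow> (nat \<Rightarrow> 'a \<Rightarrow> 'a) \<Rightarrow> nat \<Rightarrow> 'a" where
  "bwd_aux T F step 0 = F"
| "bwd_aux T F step (Suc j) = step (T - Suc j) (bwd_aux T F step j)"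

definition bwd :: "nat \<Rightarrow> 'a \<Rightarrow> (nat \<Rightarrow> 'a \<Rightarrow> 'a) \<Rightarrow> nat \<Rightarrow> 'a" where
  "bwd T F step k = bwd_aux T F step (T - k)"

(* \<Pi>_k for given covariances Sig k = \<Sigma>_{\<rho>_k} *)
definition Pi_step ::
  "real \<Rightarrow> (nat \<Rightarrow> real^'n^'n) \<Rightarrow> (nat \<Rightarrow> real^'m^'n) \<Rightarrow> (nat \<Rightarrow> real^'m^'m)
   \<Rightarrow> (nat \<Rightarrow> real^'m^'m) \<Rightarrow> nat \<Rightarrow> real^'n^'n \<Rightarrow> real^'n^'n" where
  "Pi_step \<epsilon> A B R Sig k P =
     (let C = (1/\<epsilon>) *\<^sub>R (R k + transpose (B k) ** P ** B k);
          S = psd_sqrt (Sig k)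
      in transpose (A k) ** P ** A k
         - (1/\<epsilon>) *\<^sub>R (transpose (A k) ** P ** B k ** S
              ** matrix_inv (mat 1 + S ** C ** S) ** S ** transpose (B k) ** P ** A k))"

definition Pi ::
  "real \<Rightarrow> (nat \<Rightarrow> real^'n^'n) \<Rightarrow> (nat \<Rightarrow> real^'m^'n) \<Rightarrow> (nat \<Rightarrow> real^'m^'m)
   \<Rightarrow> real^'n^'n \<Rightarrow> (nat \<Rightarrow> real^'m^'m) \<Rightarrow> nat \<Rightarrow> nat \<Rightarrow> real^'n^'n" where
  "Pi \<epsilon> A B R F Sig T = bwd T F (Pi_step \<epsilon> A B R Sig)"

definition SigmaQ ::
  "real \<Rightarrow> (nat \<Rightarrow> real^'n^'n) \<Rightarrow> (nat \<Rightarrow> real^'m^'n) \<Rightarrow> (nat \<Rightarrow> real^'m^'m)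
   \<Rightarrow> real^'n^'n \<Rightarrow> (nat \<Rightarrow> real^'m^'m) \<Rightarrow> nat \<Rightarrow> nat \<Rightarrow> real^'m^'m" where
  "SigmaQ \<epsilon> A B R F Sig T k =
     \<epsilon> *\<^sub>R matrix_inv (R k + transpose (B k) ** Pi \<epsilon> A B R F Sig T (Suc k) ** B k)"

definition Pi_check ::
  "(nat \<Rightarrow> real^'n^'n) \<Rightarrow> (nat \<Rightarrow> real^'m^'n) \<Rightarrow> (nat \<Rightarrow> real^'m^'m)
   \<Rightarrow> real^'n^'n \<Rightarrow> nat \<Rightarrow> nat \<Rightarrow> real^'n^'n" where
  "Pi_check A B R F T = bwd T F (\<lambda>k P.
     transpose (A k) ** P ** A k
     - transpose (A k) ** P ** B k ** matrix_inv (R k + transpose (B k) ** P ** B k)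
       ** transpose (B k) ** P ** A k)"

(* \<hat>\<Pi>_k = A_k^T ... A_{T-1}^T F A_{T-1} ... A_k, written as the recursion
   \<hat>\<Pi>_T = F, \<hat>\<Pi>_k = A_k^T \<hat>\<Pi>_{k+1} A_k *)
definition Pi_hat ::
  "(nat \<Rightarrow> real^'n^'n) \<Rightarrow> real^'n^'n \<Rightarrow> nat \<Rightarrow> nat \<Rightarrow> real^'n^'n" where
  "Pi_hat A F T = bwd T F (\<lambda>k P. transpose (A k) ** P ** A k)"

end

theory Submission
  imports Defs
begin


lemma inner_transpose: "(x::real^'n) \<bullet> (transpose A *v y) = (A *v x) \<bullet> (y::real^'m)"
  by (metis dot_lmul_matrix inner_commute transpose_matrix_vector)

lemma inner_sym: "transpose A = A \<Longrightarrow> x \<bullet> (A *v y) = y \<bullet> (A *v (x::real^'n))"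
  by (metis inner_transpose inner_commute)

lemma inner_ext: "(\<And>y. y \<bullet> v = y \<bullet> w) \<Longrightarrow> v = (w::real^'n)"
  by (metis inner_diff_left inner_diff_right inner_eq_zero_iff right_minus_eq)

lemma sym_eqI: "(\<And>x y. y \<bullet> (A *v x) = x \<bullet> (A *v y)) \<Longrightarrow> transpose A = (A::real^'n^'n)"
  unfolding matrix_eq
  by (metis inner_ext inner_transpose inner_commute)

lemma matrix_sum_vector: "(sum A U) *v x = (\<Sum>u\<in>U. A u *v x)"
  by (induct U rule: infinite_finite_induct) (auto simp: matrix_vector_mult_add_rdistrib)

lemma poly_zero:
  fixes a b :: real
  assumes h: "\<And>t. 2*t*a + t^2*b \<le> 0"
  shows "a = 0"
proof -
  have b: "b \<le> 0"
  proof (rule ccontr)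
    assume "\<not> b \<le> 0"
    moreover have "2*1*a + 1^2*b \<le> 0" "2*(-1)*a + (-1)^2*b \<le> 0" using h by blast+
    ultimately show False by simp
  qed
  define t where "t = a/(1-b)"
  have pos: "1 - b > 0" using b by simp
  have tc: "t*(1-b) = a" using pos unfolding t_def by simp
  have "2*t*a + t^2*b \<le> 0" using h by blast
  hence le: "(2*t*a + t^2*b) * (1-b)^2 \<le> 0" using pos by (simp add: mult_nonpos_nonneg)
  have "(2*t*a + t^2*b) * (1-b)^2 = 2*a*(t*(1-b))*(1-b) + (t*(1-b))^2*b"
    by (simp add: power2_eq_square algebra_simps)
  also have "\<dots> = a^2 * (2 - b)" unfolding tc by (simp add: power2_eq_square algebra_simps)
  finally have "a^2 * (2-b) \<le> 0" using le by simp
  moreover have "2 - b > 0" using b by simp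
  ultimately have "a^2 \<le> 0" by (simp add: mult_le_0_iff)
  thus ?thesis by simp
qed

lemma eigen_orth_exists:
  fixes M :: "real^'n^'n" and U :: "(real^'n) set"
  assumes sym: "transpose M = M" and fin: "finite U" and cardU: "card U < CARD('n)"
    and eig: "\<forall>u\<in>U. \<exists>c. M *v u = c *\<^sub>R u"
  shows "\<exists>v. norm v = 1 \<and> (\<forall>u\<in>U. u \<bullet> v = 0) \<and> (\<exists>c. M *v v = c *\<^sub>R v)"
proof -
  define V where "V = {x::real^'n. \<forall>u\<in>U. u \<bullet> x = 0}"
  have Vadd: "x + y \<in> V" if "x \<in> V" "y \<in> V" for x y
    using that by (simp add: V_def inner_add_right)
  have Vscale: "c *\<^sub>R x \<in> V" if "x \<in> V" for x c
    using that by (simp add: V_def)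
  have Vinv: "M *v x \<in> V" if "x \<in> V" for x
  proof -
    have "u \<bullet> (M *v x) = 0" if "u \<in> U" for u
    proof -
      obtain c where "M *v u = c *\<^sub>R u" using eig \<open>u \<in> U\<close> by blast
      hence "u \<bullet> (M *v x) = c * (x \<bullet> u)" using inner_sym[OF sym, of u x] by simp
      thus ?thesis using \<open>x \<in> V\<close> \<open>u \<in> U\<close> by (simp add: V_def inner_commute)
    qed
    thus ?thesis by (simp add: V_def)
  qed
  have "dim U < DIM(real^'n)" using dim_le_card'[OF fin] cardU by simp
  then have "\<exists>x0. x0 \<noteq> 0 \<and> (\<forall>y\<in>span U. orthogonal x0 y)"
    by (rule orthogonal_to_subspace_exists) blast
  then obtain x0 where x0: "x0 \<noteq> 0" "\<And>y. y \<in> span U \<Longrightarrow> orthogonal x0 y"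
    by blast
  have "u \<bullet> x0 = 0" if "u \<in> U" for u
    using x0(2)[OF span_base[OF that]] by (simp add: orthogonal_def inner_commute)
  hence x0V: "x0 \<in> V" by (simp add: V_def)
  define K where "K = V \<inter> sphere 0 1"
  have Veq: "V = (\<Inter>u\<in>U. {x. u \<bullet> x = 0})" by (auto simp: V_def)
  have "closed V" unfolding Veq by (intro closed_INT ballI closed_hyperplane)
  hence cK: "compact K" unfolding K_def by (intro closed_Int_compact compact_sphere)
  have "(1 / norm x0) *\<^sub>R x0 \<in> K" using x0 x0V Vscale by (simp add: K_def)
  hence ne: "K \<noteq> {}" by blast
  have cont: "continuous_on K (\<lambda>x. x \<bullet> (M *v x))" by (intro continuous_intros)
  obtain u where uK: "u \<in> K" and umax: "\<And>y. y \<in> K \<Longrightarrow> y \<bullet> (M *v y) \<le> u \<bullet> (M *v u)"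
    using continuous_attains_sup[OF cK ne cont] by blast
  define l where "l = u \<bullet> (M *v u)"
  have uV: "u \<in> V" using uK by (simp add: K_def)
  have un: "norm u = 1" using uK by (simp add: K_def)
  have uu: "u \<bullet> u = 1" using un by (simp add: norm_eq_1)
  have bound: "x \<bullet> (M *v x) \<le> l * (x \<bullet> x)" if "x \<in> V" for x
  proof (cases "x = 0")
    case True thus ?thesis by simp
  next
    case False
    define n where "n = norm x"
    have n: "n > 0" using False by (simp add: n_def)
    have "(1/n) *\<^sub>R x \<in> K" using that Vscale n by (simp add: K_def n_def)
    hence "((1/n) *\<^sub>R x) \<bullet> (M *v ((1/n) *\<^sub>R x)) \<le> l" using umax l_def by blast
    hence "(x \<bullet> (M *v x)) / n^2 \<le> l" by (simp add: matrix_vector_mult_scaleR power2_eq_square)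
    hence "x \<bullet> (M *v x) \<le> l * n^2" using n by (simp add: divide_le_eq)
    moreover have "n^2 = x \<bullet> x" by (simp add: n_def power2_norm_eq_inner)
    ultimately show ?thesis by simp
  qed
  have key: "y \<bullet> (M *v u - l *\<^sub>R u) = 0" if "y \<in> V" for y
  proof -
    define a where "a = y \<bullet> (M *v u) - l * (u \<bullet> y)"
    define b where "b = y \<bullet> (M *v y) - l * (y \<bullet> y)"
    have "2*t*a + t^2*b \<le> 0" for t
    proof -
      have "u + t *\<^sub>R y \<in> V" using uV that Vadd Vscale by blast
      hence bnd: "(u + t *\<^sub>R y) \<bullet> (M *v (u + t *\<^sub>R y)) \<le> l * ((u + t *\<^sub>R y) \<bullet> (u + t *\<^sub>R y))"
        by (rule bound)
      have e1: "(u + t *\<^sub>R y) \<bullet> (M *v (u + t *\<^sub>R y)) = l + 2*t*(y \<bullet> (M *v u)) + t^2 * (y \<bullet> (M *v y))"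
        using inner_sym[OF sym, of u y]
        by (simp add: matrix_vector_right_distrib matrix_vector_mult_scaleR inner_add_left inner_add_right l_def power2_eq_square algebra_simps)
      have e2: "(u + t *\<^sub>R y) \<bullet> (u + t *\<^sub>R y) = 1 + 2*t*(u \<bullet> y) + t^2*(y \<bullet> y)"
        using uu by (simp add: inner_add_left inner_add_right inner_commute power2_eq_square algebra_simps)
      have ineq: "l + 2*t*(y \<bullet> (M *v u)) + t^2 * (y \<bullet> (M *v y)) \<le> l * (1 + 2*t*(u \<bullet> y) + t^2*(y \<bullet> y))"
        using bnd unfolding e1 e2 .
      have "2*t*a + t^2*b = (l + 2*t*(y \<bullet> (M *v u)) + t^2 * (y \<bullet> (M *v y))) - l * (1 + 2*t*(u \<bullet> y) + t^2*(y \<bullet> y))"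
        unfolding a_def b_def by (simp add: algebra_simps)
      thus ?thesis using ineq by linarith
    qed
    hence "a = 0" by (rule poly_zero)
    thus ?thesis by (simp add: a_def inner_diff_right inner_commute)
  qed
  have "M *v u - l *\<^sub>R u \<in> V" using Vinv[OF uV] Vscale[OF uV] Vadd Vscale
    by (metis scaleR_minus1_left diff_conv_add_uminus)
  from key[OF this] have "M *v u = l *\<^sub>R u" by simp
  moreover have "\<forall>u'\<in>U. u' \<bullet> u = 0" using uV by (simp add: V_def)
  ultimately show ?thesis using un by blast
qed

lemma eigen_basis_k:
  fixes M :: "real^'n^'n"
  assumes sym: "transpose M = M"
  shows "k \<le> CARD('n) \<Longrightarrow> \<exists>U. finite U \<and> card U = k \<and> (\<forall>u\<in>U. norm u = 1 \<and> (\<exists>c. M *v u = c *\<^sub>R u))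
            \<and> (\<forall>u\<in>U. \<forall>v\<in>U. u \<noteq> v \<longrightarrow> u \<bullet> v = 0)"
proof (induct k)
  case 0 show ?case by (intro exI[of _ "{}"]) simp
next
  case (Suc k)
  then obtain U where U: "finite U" "card U = k" "\<forall>u\<in>U. norm u = 1 \<and> (\<exists>c. M *v u = c *\<^sub>R u)"
      "\<forall>u\<in>U. \<forall>v\<in>U. u \<noteq> v \<longrightarrow> u \<bullet> v = 0" by auto
  obtain v where v: "norm v = 1" "\<forall>u\<in>U. u \<bullet> v = 0" "\<exists>c. M *v v = c *\<^sub>R v"
    using eigen_orth_exists[OF sym U(1)] U Suc.prems by auto
  have "v \<notin> U" using v by (metis inner_eq_zero_iff norm_zero zero_neq_one)
  show ?case
    apply (rule exI[of _ "insert v U"])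
    using U v \<open>v \<notin> U\<close> by (auto simp: inner_commute)
qed

lemma spectral:
  fixes M :: "real^'n^'n"
  assumes sym: "transpose M = M"
  shows "\<exists>U. finite U \<and> (\<forall>u\<in>U. norm u = 1) \<and> (\<forall>u\<in>U. M *v u = (u \<bullet> (M *v u)) *\<^sub>R u)
     \<and> (\<forall>u\<in>U. \<forall>v\<in>U. u \<noteq> v \<longrightarrow> u \<bullet> v = 0)
     \<and> (\<forall>x. x = (\<Sum>u\<in>U. (u \<bullet> x) *\<^sub>R u))"
proof -
  have "\<exists>U. finite U \<and> card U = CARD('n) \<and> (\<forall>u\<in>U. norm u = 1 \<and> (\<exists>c. M *v u = c *\<^sub>R u))
            \<and> (\<forall>u\<in>U. \<forall>v\<in>U. u \<noteq> v \<longrightarrow> u \<bullet> v = 0)"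
    by (rule eigen_basis_k[OF sym order.refl])
  then obtain U where U1: "finite U" and U2: "card U = CARD('n)"
      and U3: "\<forall>u\<in>U. norm u = 1 \<and> (\<exists>c. M *v u = c *\<^sub>R u)"
      and U4: "\<forall>u\<in>U. \<forall>v\<in>U. u \<noteq> v \<longrightarrow> u \<bullet> v = 0"
    by (elim exE conjE)
  have nu: "norm u = 1" if "u \<in> U" for u using U3 that by blast
  have ev: "M *v u = (u \<bullet> (M *v u)) *\<^sub>R u" if "u \<in> U" for u
  proof -
    from bspec[OF U3 that] obtain c where c: "M *v u = c *\<^sub>R u" by (elim conjE exE)
    have uu: "u \<bullet> u = 1" using nu[OF that] norm_eq_1 by blast
    have h: "u \<bullet> (M *v u) = c" unfolding c inner_scaleR_right uu by simp
    show ?thesis unfolding h by (rule c)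
  qed
  have "pairwise orthogonal U" using U4 unfolding pairwise_def orthogonal_def by blast
  moreover have "0 \<notin> U" using nu[of 0] by auto
  ultimately have ind: "independent U" by (rule pairwise_orthogonal_independent)
  have "dim (UNIV :: (real^'n) set) \<le> card U" using U2 by simp
  hence "UNIV \<subseteq> span U"
    by (rule card_ge_dim_independent[OF subset_UNIV ind])
  hence spanU: "span U = UNIV" by blast
  note U = U1 U2 U3 U4
  have exp: "x = (\<Sum>u\<in>U. (u \<bullet> x) *\<^sub>R u)" for x
  proof -
    define w where "w = x - (\<Sum>u\<in>U. (u \<bullet> x) *\<^sub>R u)"
    have "orthogonal w v" if "v \<in> U" for v
    proof -
      have "v \<bullet> (\<Sum>u\<in>U. (u \<bullet> x) *\<^sub>R u) = (\<Sum>u\<in>U. (u \<bullet> x) * (v \<bullet> u))"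
        by (simp add: inner_sum_right)
      also have "\<dots> = (\<Sum>u\<in>U. if u = v then v \<bullet> x else 0)"
        apply (rule sum.cong[OF refl])
        using U(3,4) that by (auto simp: norm_eq_1)
      also have "\<dots> = v \<bullet> x" using U(1) that by simp
      finally show ?thesis by (simp add: w_def orthogonal_def inner_diff_right inner_commute)
    qed
    hence "orthogonal w w" using orthogonal_to_span spanU by blast
    thus ?thesis by (simp add: w_def orthogonal_def)
  qed
  show ?thesis
    apply (rule exI[of _ U])
    apply (intro conjI ballI allI impI)
        apply (rule U1)
       apply (erule nu)
      apply (erule ev)
     apply (rule U4[rule_format]; assumption)
    apply (rule exp)
    done
qed



lemma psd_sym: "psd S \<Longrightarrow> transpose S = S" by (simp add: psd_def)
lemma psd_nonneg: "psd S \<Longrightarrow> 0 \<le> x \<bullet> (S *v x)" by (simp add: psd_def)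

lemma self_inner_zero: "(x::real^'n) \<bullet> x = 0 \<Longrightarrow> x = 0" by simp

lemma sqrt_eig:
  fixes S M :: "real^'n^'n"
  assumes S: "psd S" and SS: "S ** S = M" and u: "M *v u = c *\<^sub>R u" and c: "c \<ge> 0"
  shows "S *v u = sqrt c *\<^sub>R u"
proof -
  have sym: "transpose S = S" using S by (rule psd_sym)
  have SSv: "S *v (S *v x) = M *v x" for x using SS by (simp add: matrix_vector_mul_assoc)
  show ?thesis
  proof (cases "c = 0")
    case True
    have "(S *v u) \<bullet> (S *v u) = u \<bullet> (transpose S *v (S *v u))" by (rule inner_transpose[symmetric])
    also have "\<dots> = u \<bullet> (M *v u)" unfolding sym SSv ..
    also have "\<dots> = 0" unfolding u True by simp
    finally have "S *v u = 0" by (rule self_inner_zero)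
    thus ?thesis using True by simp
  next
    case False
    hence cp: "c > 0" using c by simp
    define w where "w = S *v u - sqrt c *\<^sub>R u"
    have "S *v w = M *v u - sqrt c *\<^sub>R (S *v u)"
      unfolding w_def by (simp add: matrix_vector_mult_diff_distrib matrix_vector_mult_scaleR SSv)
    also have "\<dots> = (sqrt c * sqrt c) *\<^sub>R u - sqrt c *\<^sub>R (S *v u)" unfolding u using c by simp
    also have "\<dots> = - sqrt c *\<^sub>R w" unfolding w_def by (simp add: algebra_simps)
    finally have Sw: "S *v w = - sqrt c *\<^sub>R w" .
    have "0 \<le> w \<bullet> (S *v w)" using S by (rule psd_nonneg)
    also have "w \<bullet> (S *v w) = - sqrt c * (w \<bullet> w)" unfolding Sw by simp
    finally have "sqrt c * (w \<bullet> w) \<le> 0" by simp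
    moreover have "sqrt c > 0" using cp by simp
    ultimately have "w \<bullet> w \<le> 0" by (simp add: mult_le_0_iff)
    hence "w \<bullet> w = 0" by (meson antisym inner_ge_zero)
    hence "w = 0" by (rule self_inner_zero)
    thus ?thesis unfolding w_def by simp
  qed
qed

lemma orth_sum:
  assumes "finite U" "v \<in> U" "\<And>u. u \<in> U \<Longrightarrow> norm u = 1"
    "\<And>u w. u \<in> U \<Longrightarrow> w \<in> U \<Longrightarrow> u \<noteq> w \<Longrightarrow> u \<bullet> w = 0"
  shows "(\<Sum>u\<in>U. f u * (v \<bullet> (u::real^'n))) = f v"
proof -
  have "(\<Sum>u\<in>U. f u * (v \<bullet> u)) = (\<Sum>u\<in>U. if v = u then f v else 0)"
  proof (rule sum.cong[OF refl])
    fix u assume "u \<in> U"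
    show "f u * (v \<bullet> u) = (if v = u then f v else 0)"
    proof (cases "v = u")
      case True
      have "v \<bullet> v = 1" using assms(3)[OF assms(2)] norm_eq_1 by blast
      thus ?thesis using True by simp
    next
      case False thus ?thesis using assms(4)[OF assms(2) \<open>u \<in> U\<close>] by simp
    qed
  qed
  also have "\<dots> = f v" using assms(1,2) by (simp add: sum.delta)
  finally show ?thesis .
qed

lemma psd_sqrt_unique:
  fixes M S T :: "real^'n^'n"
  assumes M: "psd M" and S: "psd S" "S ** S = M" and T: "psd T" "T ** T = M"
  shows "S = T"
proof -
  obtain U where U1: "finite U" and U2': "\<forall>u\<in>U. norm u = 1"
    and U3': "\<forall>u\<in>U. M *v u = (u \<bullet> (M *v u)) *\<^sub>R u"
    and U4': "\<forall>u\<in>U. \<forall>v\<in>U. u \<noteq> v \<longrightarrow> u \<bullet> v = 0"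
    and exp': "\<forall>x. x = (\<Sum>u\<in>U. (u \<bullet> x) *\<^sub>R u)"
    using spectral[OF psd_sym[OF M]] by (elim exE conjE)
  have U2: "\<And>u. u \<in> U \<Longrightarrow> norm u = 1" using U2' by (rule bspec)
  have U3: "\<And>u. u \<in> U \<Longrightarrow> M *v u = (u \<bullet> (M *v u)) *\<^sub>R u" using U3' by (rule bspec)
  have U4: "\<And>u v. u \<in> U \<Longrightarrow> v \<in> U \<Longrightarrow> u \<noteq> v \<Longrightarrow> u \<bullet> v = 0" using U4' by blast
  have exp: "\<And>x. x = (\<Sum>u\<in>U. (u \<bullet> x) *\<^sub>R u)" using exp' by (rule spec)
  have eq: "S *v u = T *v u" if "u \<in> U" for u
  proof -
    have c: "u \<bullet> (M *v u) \<ge> 0" using M by (rule psd_nonneg)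
    show ?thesis using sqrt_eig[OF S U3[OF that] c] sqrt_eig[OF T U3[OF that] c] by simp
  qed
  have "S *v x = T *v x" for x
  proof -
    have "S *v x = S *v (\<Sum>u\<in>U. (u \<bullet> x) *\<^sub>R u)" using arg_cong[where f="(*v) S", OF exp[of x]] .
    also have "\<dots> = (\<Sum>u\<in>U. (u \<bullet> x) *\<^sub>R (S *v u))" by (simp add: vec.sum matrix_vector_mult_scaleR)
    also have "\<dots> = (\<Sum>u\<in>U. (u \<bullet> x) *\<^sub>R (T *v u))" using eq by simp
    also have "\<dots> = T *v (\<Sum>u\<in>U. (u \<bullet> x) *\<^sub>R u)" by (simp add: vec.sum matrix_vector_mult_scaleR)
    also have "\<dots> = T *v x" using arg_cong[where f="(*v) T", OF exp[of x]] by simp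
    finally show ?thesis .
  qed
  thus ?thesis by (simp add: matrix_eq)
qed

definition outer :: "real^'n \<Rightarrow> real^'n^'n" where "outer u = (\<chi> i j. u$i * u$j)"

lemma outer_mult: "outer u *v x = (u \<bullet> x) *\<^sub>R u"
  by (simp add: outer_def vec_eq_iff matrix_vector_mult_def inner_vec_def sum_distrib_left mult_ac)

lemma psd_sqrt_exists:
  fixes M :: "real^'n^'n"
  assumes M: "psd M"
  shows "\<exists>S. psd S \<and> S ** S = M"
proof -
  obtain U where U1: "finite U" and U2': "\<forall>u\<in>U. norm u = 1"
    and U3': "\<forall>u\<in>U. M *v u = (u \<bullet> (M *v u)) *\<^sub>R u"
    and U4': "\<forall>u\<in>U. \<forall>v\<in>U. u \<noteq> v \<longrightarrow> u \<bullet> v = 0"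
    and exp': "\<forall>x. x = (\<Sum>u\<in>U. (u \<bullet> x) *\<^sub>R u)"
    using spectral[OF psd_sym[OF M]] by (elim exE conjE)
  have U2: "\<And>u. u \<in> U \<Longrightarrow> norm u = 1" using U2' by (rule bspec)
  have U3: "\<And>u. u \<in> U \<Longrightarrow> M *v u = (u \<bullet> (M *v u)) *\<^sub>R u" using U3' by (rule bspec)
  have U4: "\<And>u v. u \<in> U \<Longrightarrow> v \<in> U \<Longrightarrow> u \<noteq> v \<Longrightarrow> u \<bullet> v = 0" using U4' by blast
  have exp: "\<And>x. x = (\<Sum>u\<in>U. (u \<bullet> x) *\<^sub>R u)" using exp' by (rule spec)
  define l where "l u = u \<bullet> (M *v u)" for u
  have l0: "l u \<ge> 0" for u unfolding l_def using M by (rule psd_nonneg)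
  have Ml: "M *v u = l u *\<^sub>R u" if "u \<in> U" for u unfolding l_def by (rule U3[OF that])
  define S where "S = (\<Sum>u\<in>U. sqrt (l u) *\<^sub>R outer u)"
  have Sx: "S *v x = (\<Sum>u\<in>U. (sqrt (l u) * (u \<bullet> x)) *\<^sub>R u)" for x
    unfolding S_def matrix_sum_vector
    by (simp add: scaleR_matrix_vector_assoc[symmetric] outer_mult)
  have yS: "y \<bullet> (S *v x) = (\<Sum>u\<in>U. sqrt (l u) * (u \<bullet> x) * (u \<bullet> y))" for x y
    unfolding Sx by (simp add: inner_sum_right inner_commute)
  have symS: "transpose S = S"
    by (rule sym_eqI) (simp add: yS mult_ac)
  have "0 \<le> x \<bullet> (S *v x)" for x
    unfolding yS
    apply (intro sum_nonneg)
    apply (simp only: mult.assoc)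
    apply (rule mult_nonneg_nonneg)
     apply (simp add: l0)
    apply simp
    done
  hence psdS: "psd S" using symS by (simp add: psd_def)
  have "(S ** S) *v x = M *v x" for x
  proof -
    have uS: "u \<bullet> (S *v x) = sqrt (l u) * (u \<bullet> x)" if "u \<in> U" for u
      unfolding yS using orth_sum[OF U1 that U2 U4, of "\<lambda>w. sqrt (l w) * (w \<bullet> x)"]
      by (simp add: mult_ac inner_commute)
    have "(S ** S) *v x = S *v (S *v x)" by (simp add: matrix_vector_mul_assoc)
    also have "\<dots> = (\<Sum>u\<in>U. (sqrt (l u) * (u \<bullet> (S *v x))) *\<^sub>R u)" by (rule Sx)
    also have "\<dots> = (\<Sum>u\<in>U. (l u * (u \<bullet> x)) *\<^sub>R u)"
    proof (rule sum.cong[OF refl])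
      fix u assume "u \<in> U"
      have "sqrt (l u) * sqrt (l u) = l u" using l0 by simp
      thus "(sqrt (l u) * (u \<bullet> (S *v x))) *\<^sub>R u = (l u * (u \<bullet> x)) *\<^sub>R u"
        unfolding uS[OF \<open>u \<in> U\<close>] by (simp add: mult.assoc[symmetric])
    qed
    also have "\<dots> = (\<Sum>u\<in>U. (u \<bullet> x) *\<^sub>R (M *v u))"
    proof (rule sum.cong[OF refl])
      fix u assume "u \<in> U"
      show "(l u * (u \<bullet> x)) *\<^sub>R u = (u \<bullet> x) *\<^sub>R (M *v u)"
        unfolding Ml[OF \<open>u \<in> U\<close>] by (simp add: mult.commute)
    qed
    also have "\<dots> = M *v (\<Sum>u\<in>U. (u \<bullet> x) *\<^sub>R u)" by (simp add: vec.sum matrix_vector_mult_scaleR)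
    also have "\<dots> = M *v x" using arg_cong[where f="(*v) M", OF exp[of x]] by simp
    finally show ?thesis .
  qed
  hence "S ** S = M" by (simp add: matrix_eq)
  thus ?thesis using psdS by blast
qed

lemma psd_sqrt_psd:
  assumes "psd M"
  shows "psd (psd_sqrt M)" "psd_sqrt M ** psd_sqrt M = M"
proof -
  have "\<exists>!S. psd S \<and> S ** S = M"
    using psd_sqrt_exists[OF assms] psd_sqrt_unique[OF assms] by blast
  hence "psd (psd_sqrt M) \<and> psd_sqrt M ** psd_sqrt M = M"
    unfolding psd_sqrt_def by (rule theI')
  thus "psd (psd_sqrt M)" "psd_sqrt M ** psd_sqrt M = M" by auto
qed



lemma transpose_diff': "transpose (X - Y) = transpose X - transpose (Y::real^'n^'m)"
  by (simp add: transpose_def vec_eq_iff)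
lemma transpose_add': "transpose (X + Y) = transpose X + transpose (Y::real^'n^'m)"
  by (simp add: transpose_def vec_eq_iff)

lemma loewner_I:
  fixes X Y :: "real^'n^'n"
  assumes "transpose X = X" "transpose Y = Y" "\<And>x. x \<bullet> (Y *v x) \<le> x \<bullet> (X *v x)"
  shows "loewner_ge X Y"
  unfolding loewner_ge_def psd_def
  using assms by (simp add: transpose_diff' matrix_vector_mult_diff_rdistrib inner_diff_right)

lemma loewner_D: "loewner_ge X Y \<Longrightarrow> x \<bullet> (Y *v x) \<le> x \<bullet> (X *v x)"
  unfolding loewner_ge_def psd_def
  by (metis diff_ge_0_iff_ge inner_diff_right matrix_vector_mult_diff_rdistrib)

lemma loewner_sym: "loewner_ge X Y \<Longrightarrow> transpose Y = Y \<Longrightarrow> transpose X = (X::real^'n^'n)"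
  unfolding loewner_ge_def psd_def transpose_diff' by (metis diff_add_cancel)

lemma pd_inv:
  fixes M :: "real^'n^'n"
  assumes "pd M" shows "invertible M"
proof -
  have "inj ((*v) M)"
  proof (rule injI)
    fix x y assume "M *v x = M *v y"
    hence "M *v (x - y) = 0" by (simp add: matrix_vector_mult_diff_distrib)
    hence "(x - y) \<bullet> (M *v (x - y)) = 0" by simp
    hence "x - y = 0" using assms unfolding pd_def by (metis less_irrefl)
    thus "x = y" by simp
  qed
  thus ?thesis using invertible_left_inverse matrix_left_invertible_injective by blast
qed

lemma minv: "invertible M \<Longrightarrow> M ** matrix_inv M = mat 1 \<and> matrix_inv M ** M = mat 1"
  unfolding invertible_def matrix_inv_def by (rule someI_ex)

lemma minv_vec: "invertible M \<Longrightarrow> M *v (matrix_inv M *v y) = (y::real^'n)"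
  using minv[of M] by (metis matrix_vector_mul_assoc matrix_vector_mul_lid)

lemma minv_sym:
  fixes M :: "real^'n^'n"
  assumes inv: "invertible M" and sym: "transpose M = M"
  shows "transpose (matrix_inv M) = matrix_inv M"
proof -
  have 1: "M ** matrix_inv M = mat 1" "matrix_inv M ** M = mat 1" using minv[OF inv] by auto
  have "transpose (matrix_inv M) ** M = mat 1"
    using arg_cong[where f=transpose, OF 1(1)] by (simp add: matrix_transpose_mul sym transpose_mat)
  hence "transpose (matrix_inv M) = transpose (matrix_inv M) ** (M ** matrix_inv M)"
    using 1 by (simp add: matrix_mul_assoc)
  also have "\<dots> = matrix_inv M"
    by (simp add: matrix_mul_assoc \<open>transpose (matrix_inv M) ** M = mat 1\<close>)
  finally show ?thesis .
qed

lemma quad_congr: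
  fixes X :: "real^'n^'m" and K :: "real^'m^'m"
  shows "x \<bullet> ((transpose X ** K ** X) *v x) = (X *v x) \<bullet> (K *v (X *v x))"
  unfolding matrix_vector_mul_assoc[symmetric] by (rule inner_transpose)

lemma quad_sym:
  fixes X :: "real^'n^'m" and K :: "real^'m^'m"
  shows "transpose K = K \<Longrightarrow> transpose (transpose X ** K ** X) = transpose X ** K ** X"
  by (simp add: matrix_transpose_mul matrix_mul_assoc)

lemma inv_var:
  fixes M :: "real^'n^'n"
  assumes sym: "transpose M = M" and inv: "invertible M" and ps: "\<And>v. 0 \<le> v \<bullet> (M *v v)"
  shows "2 * (v \<bullet> y) - v \<bullet> (M *v v) \<le> y \<bullet> (matrix_inv M *v y)"
proof -
  define z where "z = matrix_inv M *v y"
  have Mz: "M *v z = y" unfolding z_def by (rule minv_vec[OF inv])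
  have "0 \<le> (v - z) \<bullet> (M *v (v - z))" by (rule ps)
  also have "\<dots> = v \<bullet> (M *v v) - 2 * (v \<bullet> y) + z \<bullet> y"
    using inner_sym[OF sym, of z v]
    by (simp add: matrix_vector_mult_diff_distrib inner_diff_left inner_diff_right Mz inner_commute)
  finally show ?thesis unfolding z_def by (simp add: inner_commute)
qed

lemma inv_exact:
  fixes M :: "real^'n^'n"
  assumes inv: "invertible M"
  shows "y \<bullet> (matrix_inv M *v y) = 2 * ((matrix_inv M *v y) \<bullet> y) - (matrix_inv M *v y) \<bullet> (M *v (matrix_inv M *v y))"
  unfolding minv_vec[OF inv] by (simp add: inner_commute)

lemma inv_anti:
  fixes X Y :: "real^'n^'n"
  assumes "transpose X = X" "invertible X" "transpose Y = Y" "invertible Y" "\<And>v. 0 \<le> v \<bullet> (Y *v v)"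
    and le: "\<And>v. v \<bullet> (Y *v v) \<le> v \<bullet> (X *v v)"
  shows "y \<bullet> (matrix_inv X *v y) \<le> y \<bullet> (matrix_inv Y *v y)"
proof -
  define z where "z = matrix_inv X *v y"
  have "y \<bullet> (matrix_inv X *v y) = 2 * (z \<bullet> y) - z \<bullet> (X *v z)"
    unfolding z_def by (rule inv_exact[OF assms(2)])
  also have "\<dots> \<le> 2 * (z \<bullet> y) - z \<bullet> (Y *v z)" using le[of z] by simp
  also have "\<dots> \<le> y \<bullet> (matrix_inv Y *v y)" by (rule inv_var[OF assms(3,4,5)])
  finally show ?thesis .
qed

lemma pd_R_plus:
  fixes R :: "real^'m^'m" and B :: "real^'m^'n" and P :: "real^'n^'n"
  assumes R: "pd R" and P: "psd P"
  shows "pd (R + transpose B ** P ** B)"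
  unfolding pd_def
proof (intro conjI allI impI)
  show "transpose (R + transpose B ** P ** B) = R + transpose B ** P ** B"
    using R P quad_sym[of P B] by (simp add: pd_def psd_def transpose_add')
  fix x :: "real^'m" assume "x \<noteq> 0"
  have "0 < x \<bullet> (R *v x)" using R \<open>x \<noteq> 0\<close> by (simp add: pd_def)
  moreover have "0 \<le> x \<bullet> ((transpose B ** P ** B) *v x)"
    unfolding quad_congr using P by (simp add: psd_def)
  ultimately show "0 < x \<bullet> ((R + transpose B ** P ** B) *v x)"
    by (simp add: matrix_vector_mult_add_rdistrib inner_add_right)
qed

lemma pd_psd: "pd M \<Longrightarrow> 0 \<le> x \<bullet> (M *v x)"
  unfolding pd_def by (metis inner_zero_left matrix_vector_mult_0_right order_le_less)



definition chkstep :: "real^'n^'n \<Rightarrow> real^'m^'n \<Rightarrow> real^'m^'m \<Rightarrow> real^'n^'n \<Rightarrow> real^'n^'n" where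
  "chkstep A B R P = transpose A ** P ** A
     - transpose A ** P ** B ** matrix_inv (R + transpose B ** P ** B) ** transpose B ** P ** A"

lemma mv_neg: "A *v (- x) = - (A *v (x::real^'n))"
  by (metis scaleR_minus1_left matrix_vector_mult_scaleR)

lemma expand_V:
  fixes B :: "real^'m^'n" and P :: "real^'n^'n"
  assumes sym: "transpose P = P"
  shows "(a + B *v u) \<bullet> (P *v (a + B *v u)) = a \<bullet> (P *v a) + 2 * (u \<bullet> (transpose B *v (P *v a)))
           + u \<bullet> ((transpose B ** P ** B) *v u)"
proof -
  have 1: "a \<bullet> (P *v (B *v u)) = u \<bullet> (transpose B *v (P *v a))"
    using inner_sym[OF sym, of a "B *v u"] inner_transpose[of u B "P *v a"] by (simp add: inner_commute)
  have 2: "(B *v u) \<bullet> (P *v a) = u \<bullet> (transpose B *v (P *v a))"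
    using inner_transpose[of u B "P *v a"] by simp
  have 3: "(B *v u) \<bullet> (P *v (B *v u)) = u \<bullet> ((transpose B ** P ** B) *v u)"
    by (rule quad_congr[symmetric])
  show ?thesis
    by (simp add: matrix_vector_right_distrib inner_add_left inner_add_right 1 2 3)
qed

context
  fixes A :: "real^'n^'n" and B :: "real^'m^'n" and R :: "real^'m^'m"
  assumes R: "pd R"
begin

lemma chk_form:
  assumes P: "psd P"
  shows "chkstep A B R P = transpose A ** P ** A
     - transpose (transpose B ** P ** A) ** matrix_inv (R + transpose B ** P ** B) ** (transpose B ** P ** A)"
  using psd_sym[OF P] unfolding chkstep_def by (simp add: matrix_transpose_mul matrix_mul_assoc)

lemma chk_sym:
  assumes P: "psd P"
  shows "transpose (chkstep A B R P) = chkstep A B R P"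
proof -
  have Ms: "transpose (R + transpose B ** P ** B) = R + transpose B ** P ** B"
    using pd_R_plus[OF R P] by (simp add: pd_def)
  have Mi: "invertible (R + transpose B ** P ** B)" by (rule pd_inv[OF pd_R_plus[OF R P]])
  show ?thesis
    unfolding chk_form[OF P] transpose_diff'
    using quad_sym[of P A] quad_sym[OF minv_sym[OF Mi Ms], of "transpose B ** P ** A"] psd_sym[OF P]
    by simp
qed

lemma chk_V:
  fixes x :: "real^'n" and u :: "real^'m"
  assumes P: "psd P"
  defines "y \<equiv> transpose B *v (P *v (A *v x))"
  defines "Mx \<equiv> R + transpose B ** P ** B"
  shows "x \<bullet> (chkstep A B R P *v x) = (A *v x) \<bullet> (P *v (A *v x)) - y \<bullet> (matrix_inv Mx *v y)"
    and "(A *v x + B *v u) \<bullet> (P *v (A *v x + B *v u)) + u \<bullet> (R *v u)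
          = (A *v x) \<bullet> (P *v (A *v x)) + 2 * (u \<bullet> y) + u \<bullet> (Mx *v u)"
proof -
  have Xx: "(transpose B ** P ** A) *v x = y" unfolding y_def by (simp add: matrix_vector_mul_assoc matrix_mul_assoc)
  show "x \<bullet> (chkstep A B R P *v x) = (A *v x) \<bullet> (P *v (A *v x)) - y \<bullet> (matrix_inv Mx *v y)"
    unfolding chk_form[OF P] matrix_vector_mult_diff_rdistrib inner_diff_right quad_congr Xx Mx_def ..
  show "(A *v x + B *v u) \<bullet> (P *v (A *v x + B *v u)) + u \<bullet> (R *v u)
          = (A *v x) \<bullet> (P *v (A *v x)) + 2 * (u \<bullet> y) + u \<bullet> (Mx *v u)"
    unfolding expand_V[OF psd_sym[OF P]] Mx_def y_def
    by (simp add: matrix_vector_mult_add_rdistrib inner_add_right)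
qed

lemma chk_le_V:
  assumes P: "psd P"
  shows "x \<bullet> (chkstep A B R P *v x) \<le> (A *v x + B *v u) \<bullet> (P *v (A *v x + B *v u)) + u \<bullet> (R *v u)"
proof -
  define y where "y = transpose B *v (P *v (A *v x))"
  define Mx where "Mx = R + transpose B ** P ** B"
  have pdM: "pd Mx" unfolding Mx_def by (rule pd_R_plus[OF R P])
  have "2 * ((-u) \<bullet> y) - (-u) \<bullet> (Mx *v (-u)) \<le> y \<bullet> (matrix_inv Mx *v y)"
    by (rule inv_var) (use pdM pd_inv pd_psd in \<open>auto simp: pd_def\<close>)
  thus ?thesis unfolding chk_V(1)[OF P, of x] chk_V(2)[OF P, of x u] y_def[symmetric] Mx_def[symmetric]
    by (simp add: mv_neg)
qed

lemma chk_eq_V: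
  assumes P: "psd P"
  shows "\<exists>u. x \<bullet> (chkstep A B R P *v x) = (A *v x + B *v u) \<bullet> (P *v (A *v x + B *v u)) + u \<bullet> (R *v u)"
proof -
  define y where "y = transpose B *v (P *v (A *v x))"
  define Mx where "Mx = R + transpose B ** P ** B"
  have pdM: "pd Mx" unfolding Mx_def by (rule pd_R_plus[OF R P])
  define z where "z = matrix_inv Mx *v y"
  have Mz: "Mx *v z = y" unfolding z_def by (rule minv_vec[OF pd_inv[OF pdM]])
  have "x \<bullet> (chkstep A B R P *v x) = (A *v x + B *v (-z)) \<bullet> (P *v (A *v x + B *v (-z))) + (-z) \<bullet> (R *v (-z))"
    unfolding chk_V(1)[OF P, of x] chk_V(2)[OF P, of x "-z"] y_def[symmetric] Mx_def[symmetric]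
    by (simp add: mv_neg Mz z_def[symmetric] inner_commute)
  thus ?thesis by blast
qed

lemma chk_nonneg:
  assumes P: "psd P"
  shows "0 \<le> x \<bullet> (chkstep A B R P *v x)"
proof -
  obtain u where u: "x \<bullet> (chkstep A B R P *v x) = (A *v x + B *v u) \<bullet> (P *v (A *v x + B *v u)) + u \<bullet> (R *v u)"
    using chk_eq_V[OF P] by blast
  have "0 \<le> (A *v x + B *v u) \<bullet> (P *v (A *v x + B *v u))" using P by (rule psd_nonneg)
  moreover have "0 \<le> u \<bullet> (R *v u)" using R by (rule pd_psd)
  ultimately show ?thesis unfolding u by simp
qed

lemma chk_mono:
  assumes P: "psd P" and P': "psd P'" and le: "\<And>z. z \<bullet> (P' *v z) \<le> z \<bullet> (P *v z)"
  shows "x \<bullet> (chkstep A B R P' *v x) \<le> x \<bullet> (chkstep A B R P *v x)"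
proof -
  obtain u where u: "x \<bullet> (chkstep A B R P *v x) = (A *v x + B *v u) \<bullet> (P *v (A *v x + B *v u)) + u \<bullet> (R *v u)"
    using chk_eq_V[OF P] by blast
  have "x \<bullet> (chkstep A B R P' *v x) \<le> (A *v x + B *v u) \<bullet> (P' *v (A *v x + B *v u)) + u \<bullet> (R *v u)"
    by (rule chk_le_V[OF P'])
  also have "\<dots> \<le> (A *v x + B *v u) \<bullet> (P *v (A *v x + B *v u)) + u \<bullet> (R *v u)"
    using le by simp
  finally show ?thesis unfolding u .
qed

end



definition pistep :: "real \<Rightarrow> real^'m^'m \<Rightarrow> real^'n^'n \<Rightarrow> real^'m^'n \<Rightarrow> real^'m^'m \<Rightarrow> real^'n^'n \<Rightarrow> real^'n^'n" where
  "pistep \<epsilon> S A B R P = transpose A ** P ** A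
     - (1/\<epsilon>) *\<^sub>R (transpose A ** P ** B ** S
        ** matrix_inv (mat 1 + S ** ((1/\<epsilon>) *\<^sub>R (R + transpose B ** P ** B)) ** S) ** S ** transpose B ** P ** A)"

lemma Pi_step_eq: "Pi_step \<epsilon> A B R Sig k P = pistep \<epsilon> (psd_sqrt (Sig k)) (A k) (B k) (R k) P"
  unfolding Pi_step_def pistep_def Let_def ..

lemma quad_scale: "x \<bullet> ((c *\<^sub>R K) *v x) = c * (x \<bullet> (K *v (x::real^'n)))"
  by (simp add: scaleR_matrix_vector_assoc[symmetric])

context
  fixes \<epsilon> :: real and S :: "real^'m^'m" and A :: "real^'n^'n" and B :: "real^'m^'n" and R :: "real^'m^'m"
  assumes R: "pd R" and e: "\<epsilon> > 0" and S: "transpose S = S"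
begin

lemma N_quad:
  fixes Mx :: "real^'m^'m"
  shows "z \<bullet> ((mat 1 + S ** ((1/\<epsilon>) *\<^sub>R Mx) ** S) *v z) = z \<bullet> z + (1/\<epsilon>) * ((S *v z) \<bullet> (Mx *v (S *v z)))"
proof -
  have "z \<bullet> ((S ** ((1/\<epsilon>) *\<^sub>R Mx) ** S) *v z) = (S *v z) \<bullet> (((1/\<epsilon>) *\<^sub>R Mx) *v (S *v z))"
    using quad_congr[of z S "(1/\<epsilon>) *\<^sub>R Mx"] S by simp
  thus ?thesis by (simp add: matrix_vector_mult_add_rdistrib inner_add_right scaleR_matrix_vector_assoc[symmetric])
qed

context
  fixes P :: "real^'n^'n"
  assumes P: "psd P"
begin

definition "Mx = R + transpose B ** P ** B"
definition "NN = mat 1 + S ** ((1/\<epsilon>) *\<^sub>R Mx) ** S"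

lemma pdM: "pd Mx" unfolding Mx_def by (rule pd_R_plus[OF R P])
lemma Msym: "transpose Mx = Mx" using pdM by (simp add: pd_def)
lemma Minv: "invertible Mx" by (rule pd_inv[OF pdM])

lemma Nsym: "transpose NN = NN"
  unfolding NN_def by (simp add: transpose_add' transpose_mat matrix_transpose_mul transpose_scalar Msym S matrix_mul_assoc)

lemma Npd: "pd NN"
  unfolding pd_def
proof (intro conjI allI impI)
  show "transpose NN = NN" by (rule Nsym)
  fix z :: "real^'m" assume "z \<noteq> 0"
  have "0 \<le> (S *v z) \<bullet> (Mx *v (S *v z))" by (rule pd_psd[OF pdM])
  hence "0 \<le> (1/\<epsilon>) * ((S *v z) \<bullet> (Mx *v (S *v z)))" using e by simp
  moreover have "0 < z \<bullet> z" using \<open>z \<noteq> 0\<close> by simp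
  ultimately show "0 < z \<bullet> (NN *v z)" unfolding NN_def N_quad by linarith
qed

lemma Ninv: "invertible NN" by (rule pd_inv[OF Npd])

lemma pi_form:
  "pistep \<epsilon> S A B R P = transpose A ** P ** A
     - (1/\<epsilon>) *\<^sub>R (transpose (transpose B ** P ** A) ** (S ** matrix_inv NN ** S) ** (transpose B ** P ** A))"
  using psd_sym[OF P] unfolding pistep_def NN_def Mx_def by (simp add: matrix_transpose_mul matrix_mul_assoc)

lemma pi_sym: "transpose (pistep \<epsilon> S A B R P) = pistep \<epsilon> S A B R P"
proof -
  have "transpose (S ** matrix_inv NN ** S) = S ** matrix_inv NN ** S"
    by (simp add: matrix_transpose_mul minv_sym[OF Ninv Nsym] S matrix_mul_assoc)
  thus ?thesis
    unfolding pi_form transpose_diff' transpose_scalar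
    using quad_sym[of P A] quad_sym[of "S ** matrix_inv NN ** S" "transpose B ** P ** A"] psd_sym[OF P]
    by simp
qed

lemma pi_quad:
  fixes x :: "real^'n"
  defines "y \<equiv> transpose B *v (P *v (A *v x))"
  shows "x \<bullet> (pistep \<epsilon> S A B R P *v x) = (A *v x) \<bullet> (P *v (A *v x)) - (1/\<epsilon>) * ((S *v y) \<bullet> (matrix_inv NN *v (S *v y)))"
proof -
  have Xx: "(transpose B ** P ** A) *v x = y" unfolding y_def by (simp add: matrix_vector_mul_assoc matrix_mul_assoc)
  have "y \<bullet> ((S ** matrix_inv NN ** S) *v y) = y \<bullet> (transpose S *v (matrix_inv NN *v (S *v y)))"
    by (simp add: S matrix_vector_mul_assoc matrix_mul_assoc)
  also have "\<dots> = (S *v y) \<bullet> (matrix_inv NN *v (S *v y))" by (rule inner_transpose)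
  finally have h: "y \<bullet> ((S ** matrix_inv NN ** S) *v y) = (S *v y) \<bullet> (matrix_inv NN *v (S *v y))" .
  show ?thesis
    unfolding pi_form matrix_vector_mult_diff_rdistrib inner_diff_right quad_scale quad_congr Xx h ..
qed

lemma pi_bounds:
  fixes y :: "real^'m"
  shows "0 \<le> (S *v y) \<bullet> (matrix_inv NN *v (S *v y))"
    and "(1/\<epsilon>) * ((S *v y) \<bullet> (matrix_inv NN *v (S *v y))) \<le> y \<bullet> (matrix_inv Mx *v y)"
proof -
  define w where "w = S *v y"
  define z where "z = matrix_inv NN *v w"
  define t where "t = (S *v z) \<bullet> (Mx *v (S *v z))"
  have t0: "0 \<le> t" unfolding t_def by (rule pd_psd[OF pdM])
  have Nz: "NN *v z = w" unfolding z_def by (rule minv_vec[OF Ninv])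
  have wz: "w \<bullet> z = z \<bullet> z + (1/\<epsilon>) * t"
    using N_quad[of z Mx] unfolding NN_def[symmetric] Nz t_def by (simp add: inner_commute)
  have zz: "0 \<le> z \<bullet> z" by simp
  show "0 \<le> (S *v y) \<bullet> (matrix_inv NN *v (S *v y))"
    unfolding w_def[symmetric] z_def[symmetric] wz using t0 e zz by simp
  define v where "v = (1/\<epsilon>) *\<^sub>R (S *v z)"
  have var: "2 * (v \<bullet> y) - v \<bullet> (Mx *v v) \<le> y \<bullet> (matrix_inv Mx *v y)"
    by (rule inv_var[OF Msym Minv pd_psd[OF pdM]])
  have "(S *v z) \<bullet> y = z \<bullet> w"
    unfolding w_def using inner_sym[OF S, of y z] by (simp add: inner_commute)
  hence vy: "v \<bullet> y = (1/\<epsilon>) * (z \<bullet> z + (1/\<epsilon>) * t)" unfolding v_def using wz by (simp add: inner_commute)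
  have vMv: "v \<bullet> (Mx *v v) = (1/\<epsilon>) * ((1/\<epsilon>) * t)" unfolding v_def t_def
    by (simp add: matrix_vector_mult_scaleR)
  have "(1/\<epsilon>) * (w \<bullet> z) \<le> 2 * (v \<bullet> y) - v \<bullet> (Mx *v v)"
  proof -
    have a0: "0 \<le> (1/\<epsilon>) * (z \<bullet> z)" using e by simp
    show ?thesis unfolding vy vMv wz distrib_left using a0 by linarith
  qed
  thus "(1/\<epsilon>) * ((S *v y) \<bullet> (matrix_inv NN *v (S *v y))) \<le> y \<bullet> (matrix_inv Mx *v y)"
    unfolding w_def[symmetric] z_def[symmetric] using var by linarith
qed

lemma pi_le_hat: "x \<bullet> (pistep \<epsilon> S A B R P *v x) \<le> (A *v x) \<bullet> (P *v (A *v x))"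
  unfolding pi_quad using pi_bounds(1) e by simp

lemma pi_ge_chk: "x \<bullet> (chkstep A B R P *v x) \<le> x \<bullet> (pistep \<epsilon> S A B R P *v x)"
  unfolding pi_quad chk_V(1)[OF R P] Mx_def[symmetric] using pi_bounds(2) by simp

end
end


lemma bwd_T: "bwd T F step T = F" by (simp add: bwd_def)

lemma bwd_step: "k < T \<Longrightarrow> bwd T F step k = step k (bwd T F step (Suc k))"
proof -
  assume "k < T"
  hence e1: "T - k = Suc (T - Suc k)" by simp
  have e2: "T - Suc (T - Suc k) = k" using \<open>k < T\<close> by simp
  show ?thesis unfolding bwd_def e1 bwd_aux.simps e2 ..
qed

lemma psd_from_loewner: "loewner_ge X Y \<Longrightarrow> psd Y \<Longrightarrow> psd X"
  unfolding psd_def by (metis loewner_D loewner_sym order_trans)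

lemma loewner_refl: "transpose X = X \<Longrightarrow> loewner_ge X X"
  by (rule loewner_I) auto

lemma quad_add: "x \<bullet> ((X + Y) *v x) = x \<bullet> (X *v x) + x \<bullet> (Y *v (x::real^'n))"
  by (simp add: matrix_vector_mult_add_rdistrib inner_add_right)

lemma M_mono:
  fixes R :: "real^'m^'m" and B :: "real^'m^'n" and P P' :: "real^'n^'n"
  assumes "loewner_ge P P'"
  shows "u \<bullet> ((R + transpose B ** P' ** B) *v u) \<le> u \<bullet> ((R + transpose B ** P ** B) *v u)"
  unfolding quad_add quad_congr using loewner_D[OF assms] by simp

lemma inv_loewner:
  fixes X Y :: "real^'n^'n"
  assumes "pd X" "pd Y" "\<And>v. v \<bullet> (Y *v v) \<le> v \<bullet> (X *v v)" "\<epsilon> > 0"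
  shows "loewner_ge (\<epsilon> *\<^sub>R matrix_inv Y) (\<epsilon> *\<^sub>R matrix_inv X)"
proof (rule loewner_I)
  have sX: "transpose X = X" and sY: "transpose Y = Y" using assms by (auto simp: pd_def)
  show "transpose (\<epsilon> *\<^sub>R matrix_inv Y) = \<epsilon> *\<^sub>R matrix_inv Y"
    by (simp add: transpose_scalar minv_sym[OF pd_inv[OF assms(2)] sY])
  show "transpose (\<epsilon> *\<^sub>R matrix_inv X) = \<epsilon> *\<^sub>R matrix_inv X"
    by (simp add: transpose_scalar minv_sym[OF pd_inv[OF assms(1)] sX])
  fix x
  have "x \<bullet> (matrix_inv X *v x) \<le> x \<bullet> (matrix_inv Y *v x)"
    by (rule inv_anti[OF sX pd_inv[OF assms(1)] sY pd_inv[OF assms(2)] pd_psd[OF assms(2)] assms(3)])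
  thus "x \<bullet> ((\<epsilon> *\<^sub>R matrix_inv X) *v x) \<le> x \<bullet> ((\<epsilon> *\<^sub>R matrix_inv Y) *v x)"
    unfolding quad_scale using assms(4) by (simp add: mult_left_mono)
qed

lemma inv_pd:
  fixes M :: "real^'n^'n"
  assumes "pd M" "\<epsilon> > 0"
  shows "pd (\<epsilon> *\<^sub>R matrix_inv M)"
  unfolding pd_def
proof (intro conjI allI impI)
  have sM: "transpose M = M" using assms by (simp add: pd_def)
  have inv: "invertible M" by (rule pd_inv[OF assms(1)])
  show "transpose (\<epsilon> *\<^sub>R matrix_inv M) = \<epsilon> *\<^sub>R matrix_inv M"
    by (simp add: transpose_scalar minv_sym[OF inv sM])
  fix y :: "real^'n" assume "y \<noteq> 0"
  define z where "z = matrix_inv M *v y"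
  have Mz: "M *v z = y" unfolding z_def by (rule minv_vec[OF inv])
  have "z \<noteq> 0" using Mz \<open>y \<noteq> 0\<close> by auto
  hence "0 < z \<bullet> (M *v z)" using assms(1) by (simp add: pd_def)
  hence "0 < y \<bullet> (matrix_inv M *v y)" unfolding Mz z_def[symmetric] by (simp add: inner_commute)
  thus "0 < y \<bullet> ((\<epsilon> *\<^sub>R matrix_inv M) *v y)" unfolding quad_scale using assms(2) by simp
qed

theorem lemma2:
  fixes \<epsilon> :: real and T :: nat
    and A :: "nat \<Rightarrow> real^'n^'n" and B :: "nat \<Rightarrow> real^'m^'n"
    and R :: "nat \<Rightarrow> real^'m^'m" and F :: "real^'n^'n"
    and Sig :: "nat \<Rightarrow> real^'m^'m"
  assumes "T \<ge> 1" and "\<epsilon> > 0"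
    and "\<And>k. k < T \<Longrightarrow> pd (R k)"
    and "psd F"
    and "\<And>k. k < T \<Longrightarrow> psd (Sig k)"
  shows "(\<forall>k\<le>T. loewner_ge (Pi_hat A F T k) (Pi \<epsilon> A B R F Sig T k)
                 \<and> loewner_ge (Pi \<epsilon> A B R F Sig T k) (Pi_check A B R F T k)
                 \<and> psd (Pi_check A B R F T k))
       \<and> (\<forall>k<T. loewner_ge (\<epsilon> *\<^sub>R matrix_inv (R k + transpose (B k) ** Pi_check A B R F T (Suc k) ** B k))
                             (SigmaQ \<epsilon> A B R F Sig T k)
                 \<and> loewner_ge (SigmaQ \<epsilon> A B R F Sig T k)
                             (\<epsilon> *\<^sub>R matrix_inv (R k + transpose (B k) ** Pi_hat A F T (Suc k) ** B k))
                 \<and> pd (\<epsilon> *\<^sub>R matrix_inv (R k + transpose (B k) ** Pi_hat A F T (Suc k) ** B k)))"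
proof -
  note e = assms(2) and Rpd = assms(3) and Fpsd = assms(4) and Sigpsd = assms(5)
  define Pk where "Pk = Pi \<epsilon> A B R F Sig T"
  define Ck where "Ck = Pi_check A B R F T"
  define Hk where "Hk = Pi_hat A F T"
  have PT: "Pk T = F" unfolding Pk_def Pi_def by (rule bwd_T)
  have CT: "Ck T = F" unfolding Ck_def Pi_check_def by (rule bwd_T)
  have HT: "Hk T = F" unfolding Hk_def Pi_hat_def by (rule bwd_T)
  have Pstep: "Pk k = pistep \<epsilon> (psd_sqrt (Sig k)) (A k) (B k) (R k) (Pk (Suc k))" if "k < T" for k
    unfolding Pk_def Pi_def bwd_step[OF that] Pi_step_eq ..
  have Cstep: "Ck k = chkstep (A k) (B k) (R k) (Ck (Suc k))" if "k < T" for k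
    unfolding Ck_def Pi_check_def bwd_step[OF that] chkstep_def ..
  have Hstep: "Hk k = transpose (A k) ** Hk (Suc k) ** A k" if "k < T" for k
    unfolding Hk_def Pi_hat_def bwd_step[OF that] ..
  have Fsym: "transpose F = F" using Fpsd by (rule psd_sym)
  have main: "loewner_ge (Hk k) (Pk k) \<and> loewner_ge (Pk k) (Ck k) \<and> psd (Ck k)" if "k \<le> T" for k
    using that
  proof (induct k rule: inc_induct)
    case base
    show ?case unfolding PT CT HT using loewner_refl[OF Fsym] Fpsd by simp
  next
    case (step n)
    have IH: "loewner_ge (Hk (Suc n)) (Pk (Suc n))" "loewner_ge (Pk (Suc n)) (Ck (Suc n))" "psd (Ck (Suc n))"
      using step.hyps(3) by auto
    have P': "psd (Ck (Suc n))" by (rule IH(3))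
    have P: "psd (Pk (Suc n))" by (rule psd_from_loewner[OF IH(2) P'])
    have Hs: "transpose (Hk (Suc n)) = Hk (Suc n)" by (rule loewner_sym[OF IH(1) psd_sym[OF P]])
    have Rn: "pd (R n)" using Rpd step.hyps(2) by blast
    have Ss: "transpose (psd_sqrt (Sig n)) = psd_sqrt (Sig n)"
      using psd_sqrt_psd(1)[OF Sigpsd[OF step.hyps(2)]] by (rule psd_sym)
    let ?S = "psd_sqrt (Sig n)"
    have piS: "transpose (Pk n) = Pk n"
      unfolding Pstep[OF step.hyps(2)] by (rule pi_sym[OF Rn e Ss P])
    have chS: "transpose (Ck n) = Ck n"
      unfolding Cstep[OF step.hyps(2)] by (rule chk_sym[OF Rn P'])
    have hS: "transpose (Hk n) = Hk n"
      unfolding Hstep[OF step.hyps(2)] by (rule quad_sym[OF Hs])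
    have L1: "loewner_ge (Hk n) (Pk n)"
    proof (rule loewner_I[OF hS piS])
      fix x
      have "x \<bullet> (Pk n *v x) \<le> (A n *v x) \<bullet> (Pk (Suc n) *v (A n *v x))"
        unfolding Pstep[OF step.hyps(2)] by (rule pi_le_hat[OF Rn e Ss P])
      also have "\<dots> \<le> (A n *v x) \<bullet> (Hk (Suc n) *v (A n *v x))" by (rule loewner_D[OF IH(1)])
      also have "\<dots> = x \<bullet> (Hk n *v x)" unfolding Hstep[OF step.hyps(2)] quad_congr ..
      finally show "x \<bullet> (Pk n *v x) \<le> x \<bullet> (Hk n *v x)" .
    qed
    have L2: "loewner_ge (Pk n) (Ck n)"
    proof (rule loewner_I[OF piS chS])
      fix x
      have "x \<bullet> (Ck n *v x) \<le> x \<bullet> (chkstep (A n) (B n) (R n) (Pk (Suc n)) *v x)"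
        unfolding Cstep[OF step.hyps(2)] by (rule chk_mono[OF Rn P P' loewner_D[OF IH(2)]])
      also have "\<dots> \<le> x \<bullet> (Pk n *v x)"
        unfolding Pstep[OF step.hyps(2)] by (rule pi_ge_chk[OF Rn e Ss P])
      finally show "x \<bullet> (Ck n *v x) \<le> x \<bullet> (Pk n *v x)" .
    qed
    have L3: "psd (Ck n)"
      unfolding psd_def using chS chk_nonneg[OF Rn P'] unfolding Cstep[OF step.hyps(2)] by simp
    show ?case using L1 L2 L3 by simp
  qed
  have part2: "loewner_ge (\<epsilon> *\<^sub>R matrix_inv (R k + transpose (B k) ** Ck (Suc k) ** B k))
                             (\<epsilon> *\<^sub>R matrix_inv (R k + transpose (B k) ** Pk (Suc k) ** B k))
                 \<and> loewner_ge (\<epsilon> *\<^sub>R matrix_inv (R k + transpose (B k) ** Pk (Suc k) ** B k))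
                             (\<epsilon> *\<^sub>R matrix_inv (R k + transpose (B k) ** Hk (Suc k) ** B k))
                 \<and> pd (\<epsilon> *\<^sub>R matrix_inv (R k + transpose (B k) ** Hk (Suc k) ** B k))" if "k < T" for k
  proof -
    have I: "loewner_ge (Hk (Suc k)) (Pk (Suc k))" "loewner_ge (Pk (Suc k)) (Ck (Suc k))" "psd (Ck (Suc k))"
      using main[of "Suc k"] that by auto
    have Pc: "psd (Ck (Suc k))" by (rule I(3))
    have Pp: "psd (Pk (Suc k))" by (rule psd_from_loewner[OF I(2) Pc])
    have Ph: "psd (Hk (Suc k))" by (rule psd_from_loewner[OF I(1) Pp])
    have Rk: "pd (R k)" using Rpd that by blast
    show ?thesis
      using inv_loewner[OF pd_R_plus[OF Rk Pp] pd_R_plus[OF Rk Pc] M_mono[OF I(2)] e]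
        inv_loewner[OF pd_R_plus[OF Rk Ph] pd_R_plus[OF Rk Pp] M_mono[OF I(1)] e]
        inv_pd[OF pd_R_plus[OF Rk Ph] e]
      by blast
  qed
  show ?thesis
    using main part2 unfolding Pk_def Ck_def Hk_def SigmaQ_def by blast
qed

end
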